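(* Let $n\ge 2$, $N>0$, $B>0$, $\alpha>1$, $0<\beta<1$ and unit prices $\lambda_1,\dots,\lambda_n>0$. Consider the two-stage Stackelberg game in which the platform (leader) chooses a reward $R\in[0,B]$, and then miners $s_1,\dots,s_n$ (followers) play the miners' game in which $s_i$ chooses $\mu_i\ge0$ with profit $P_i=\frac{\mu_i}{\sum_{j}\mu_j}RN-\lambda_i\mu_i$ (the fraction being $0$ if $\sum_j\mu_j=0$). The platform's utility is $$U(R,\boldsymbol{\mu})=\alpha\left[\sigma\Big(\beta\sum_{i=1}^n\mu_i\Big)-\tfrac12\right]-R,\qquad \sigma(x)=\frac{1}{1+e^{-x}}.$$ Then there exists a unique Stackelberg equilibrium $(\boldsymbol{\mu}^*,R^* )$ of this game.
   Context: For each $R\in[0,B]$ the miners' game has a unique Nash equilibrium $\boldsymbol{\mu}^{NE}(R)$ (a profile with $\mu_i\ge0$ from which no miner can strictly increase its profit by a unilateral deviation to another $\mu_i\ge 0$). A Stackelberg equilibrium is a pair $(\boldsymbol{\mu}^*,R^* )$ with $R^*\in[0,B]$ such that $\boldsymbol{\mu}^*=\boldsymbol{\mu}^{NE}(R^* )$ (i.e. $P_i(\mu_i^*\mid\boldsymbol{\mu}^*_{-i},R^* )\ge P_i(\mu_i\mid\boldsymbol{\mu}^*_{-i},R^* )$ for all $i$ and all $\mu_i\ge0$) and $U(R^*,\boldsymbol{\mu}^{NE}(R^* ))\ge U(R,\boldsymbol{\mu}^{NE}(R))$ for all $R\in[0,B]$. *)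

theory Defs
  imports Complex_Main "HOL-Library.Cardinality"
begin

text \<open>Miners are indexed by a finite type 'n (n = CARD('n)); a strategy profile is
  a function mu :: 'n => real.\<close>

definition share :: "('n::finite \<Rightarrow> real) \<Rightarrow> 'n \<Rightarrow> real" where
  "share mu i = (if (\<Sum>j\<in>UNIV. mu j) = 0 then 0 else mu i / (\<Sum>j\<in>UNIV. mu j))"

definition profit :: "real \<Rightarrow> ('n::finite \<Rightarrow> real) \<Rightarrow> real \<Rightarrow> ('n \<Rightarrow> real) \<Rightarrow> 'n \<Rightarrow> real" where
  "profit N lam R mu i = share mu i * R * N - lam i * mu i"

definition is_NE :: "real \<Rightarrow> ('n::finite \<Rightarrow> real) \<Rightarrow> real \<Rightarrow> ('n \<Rightarrow> real) \<Rightarrow> bool" where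
  "is_NE N lam R mu \<longleftrightarrow> (\<forall>i. mu i \<ge> 0) \<and>
     (\<forall>i x. x \<ge> 0 \<longrightarrow> profit N lam R (mu(i := x)) i \<le> profit N lam R mu i)"

definition sigmoid :: "real \<Rightarrow> real" where
  "sigmoid x = 1 / (1 + exp (- x))"

definition platform_U :: "real \<Rightarrow> real \<Rightarrow> real \<Rightarrow> ('n::finite \<Rightarrow> real) \<Rightarrow> real" where
  "platform_U alpha beta R mu = alpha * (sigmoid (beta * (\<Sum>i\<in>UNIV. mu i)) - 1/2) - R"

definition is_SE :: "real \<Rightarrow> ('n::finite \<Rightarrow> real) \<Rightarrow> real \<Rightarrow> real \<Rightarrow> real \<Rightarrow> ('n \<Rightarrow> real) \<Rightarrow> real \<Rightarrow> bool" where
  "is_SE N lam B alpha beta mu R \<longleftrightarrow> R \<in> {0..B} \<and> is_NE N lam R mu \<and>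
     (\<forall>R'\<in>{0..B}. \<forall>mu'. is_NE N lam R' mu' \<longrightarrow>
        platform_U alpha beta R' mu' \<le> platform_U alpha beta R mu)"

end

theory Submission
  imports Defs
begin


lemma resp_opt:
  fixes R N T l S x0 x :: real
  assumes R: "R > 0" and N: "N > 0" and l: "l > 0" and S: "S > 0"
    and x0: "x0 = S * max 0 (1 - l * S / (R*N))" and T: "T = S - x0" and x: "x \<ge> 0"
  shows "x / (x+T) * R * N - l * x \<le> x0 / (x0+T) * R * N - l * x0"
proof -
  define V where "V = R*N"
  have V: "V > 0" using R N by (simp add: V_def)
  have e1: "x / (x+T) * R * N = x / (x+T) * V" by (simp add: V_def)
  have e2: "x0 / (x0+T) * R * N = x0 / (x0+T) * V" by (simp add: V_def)
  show ?thesis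
  proof (cases "1 - l * S / V \<le> 0")
    case True
    then have "x0 = 0" using x0 by (simp add: V_def)
    then have T': "T = S" using T by simp
    have lS: "l * S \<ge> V" using True V by (simp add: field_simps)
    have "x / (x+S) * V \<le> l * x"
    proof -
      have "x / (x+S) * V = x * V / (x+S)" by simp
      also have "\<dots> \<le> x * V / S" using x S V by (intro divide_left_mono) (auto intro: mult_nonneg_nonneg)
      also have "\<dots> \<le> x * l"
      proof -
        have "V * x \<le> (l*S) * x" using lS x by (rule mult_right_mono)
        then show ?thesis using S by (simp add: field_simps)
      qed
      finally show ?thesis by (simp add: mult.commute)
    qed
    then show ?thesis using e1 e2 \<open>x0 = 0\<close> T' by (simp add: V_def mult.assoc)
  next
    case False
    then have x0e: "x0 = S * (1 - l * S / V)" using x0 by (simp add: V_def)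
    have Te: "T = l * S * S / V" using T x0e V by (simp add: field_simps)
    have Tp: "T > 0" using Te l S V by simp
    have s0: "x0 + T = S" using T by simp
    have VT: "V*T = l*S*S" using Te V by simp
    have key1: "(x / (x+T) * V - l * x) = V + l*T - (V*T/(x+T) + l*(x+T))"
      using Tp x V by (simp add: field_simps)
    have key: "(x / (x+T) * V - l * x) = V + l*T - (l*S*S/(x+T) + l*(x+T))"
      using key1 unfolding VT .
    have key0': "(x0 / (x0+T) * V - l * x0) = V + l*T - (V*T/(x0+T) + l*(x0+T))"
      using S unfolding T by (simp add: field_simps)
    have key0: "(x0 / (x0+T) * V - l * x0) = V + l*T - 2*l*S"
      using key0' unfolding VT s0 using S by (simp add: field_simps)
    have "l*S*S/(x+T) + l*(x+T) - 2*l*S = l * (x+T-S)^2/(x+T)"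
      using Tp x by (simp add: field_simps power2_eq_square)
    moreover have "l * (x+T-S)^2/(x+T) \<ge> 0" using Tp x l by simp
    ultimately show ?thesis using key key0 e1 e2 by linarith
  qed
qed

lemma resp_unique:
  fixes R N T l x0 :: real
  assumes R: "R > 0" and N: "N > 0" and l: "l > 0" and Tp: "T > 0" and x0: "x0 \<ge> 0"
    and opt: "\<And>x. x \<ge> 0 \<Longrightarrow> x / (x+T) * R * N - l * x \<le> x0 / (x0+T) * R * N - l * x0"
  shows "x0 = (x0+T) * max 0 (1 - l * (x0+T) / (R*N))"
proof -
  define V where "V = R*N"
  have V: "V > 0" using R N by (simp add: V_def)
  have opt': "x / (x+T) * V - l * x \<le> x0 / (x0+T) * V - l * x0" if "x \<ge> 0" for x
    using opt[OF that] by (simp add: V_def mult.assoc)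
  define S where "S = x0 + T"
  have S: "S > 0" using x0 Tp by (simp add: S_def)
  have gform: "x / (x+T) * V - l * x = V + l*T - (V*T/(x+T) + l*(x+T))" if "x \<ge> 0" for x
    using Tp that V by (simp add: field_simps)
  show ?thesis
  proof (cases "l * T \<ge> V")
    case True
    have "x0 = 0"
    proof (rule ccontr)
      assume "x0 \<noteq> 0"
      then have xp: "x0 > 0" using x0 by simp
      have "V / (x0+T) < V / T" using V Tp xp by (intro divide_strict_left_mono) auto
      also have "\<dots> \<le> l" using True Tp by (simp add: field_simps)
      finally have "x0 * (V / (x0+T)) < x0 * l" using xp by (rule mult_strict_left_mono)
      then have "x0 / (x0+T) * V - l * x0 < 0" by (simp add: field_simps)
      moreover have "0 \<le> x0 / (x0+T) * V - l * x0" using opt'[of 0] by simp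
      ultimately show False by simp
    qed
    moreover have "1 - l * T / V \<le> 0" using True V by (simp add: field_simps)
    ultimately show ?thesis by (simp add: V_def)
  next
    case False
    define m where "m = sqrt (V*T/l)"
    have nn: "V*T/l \<ge> 0" using V Tp l by simp
    have m2: "m*m = V*T/l" unfolding m_def using V Tp l by simp
    have mpos: "m > 0" unfolding m_def using V Tp l by simp
    have lmm: "l*(m*m) = V*T" using m2 l by simp
    have "(l*T)*T < V*T" using False Tp by (intro mult_strict_right_mono) auto
    then have "l*(T*T) < l*(m*m)" using lmm by (simp add: mult.assoc)
    then have "T*T < m*m" using l by simp
    then have mT: "m > T"
    proof -
      assume tm: "T*T < m*m"
      show "m > T"
      proof (rule ccontr)
        assume "\<not> m > T"
        then have "m \<le> T" by simp
        then have "m*m \<le> T*T" using mpos by (intro mult_mono) auto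
        then show False using tm by simp
      qed
    qed
    have a: "x0 / (x0+T) * V - l * x0 \<ge> (m-T) / ((m-T)+T) * V - l * (m-T)"
      using opt'[of "m-T"] mT by simp
    have b1: "(m-T) / ((m-T)+T) * V - l * (m-T) = V + l*T - 2*l*m"
      using gform[of "m-T"] mT mpos m2 l by (simp add: field_simps)
    have b2: "x0 / (x0+T) * V - l * x0 = V + l*T - (l*m*m/S + l*S)"
      using gform[OF x0] m2 l by (simp add: S_def field_simps)
    have "l*m*m/S + l*S - 2*l*m = l*(S-m)^2/S" using S by (simp add: field_simps power2_eq_square)
    then have "l*(S-m)^2/S \<le> 0" using a b1 b2 by linarith
    then have "(S-m)^2 \<le> 0" using l S by (simp add: divide_le_0_iff mult_le_0_iff)
    then have Sm: "S = m" by simp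
    have "l*S*S = V*T" using m2 Sm l by (simp add: field_simps)
    then have "x0 = S * (1 - l*S/V)" using V by (simp add: S_def field_simps)
    moreover have "1 - l*S/V \<ge> 0"
    proof -
      have "0 \<le> S * (1 - l*S/V)" using \<open>x0 = S * (1 - l*S/V)\<close> x0 by simp
      then show ?thesis using S by (simp add: zero_le_mult_iff)
    qed
    ultimately show ?thesis by (simp add: S_def V_def)
  qed
qed


definition hfun :: "('n::finite \<Rightarrow> real) \<Rightarrow> real \<Rightarrow> real" where
  "hfun lam t = (\<Sum>i\<in>UNIV. max 0 (1 - lam i * t))"

lemma h_strict:
  fixes lam :: "'n::finite \<Rightarrow> real"
  assumes lam: "\<And>i. lam i > 0" and t: "t1 < t2" and h: "hfun lam t2 > 0"
  shows "hfun lam t2 < hfun lam t1"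
proof -
  obtain i where i: "max 0 (1 - lam i * t2) > 0"
  proof (rule ccontr)
    assume "\<not> thesis"
    with that have "\<forall>i. max 0 (1 - lam i * t2) \<le> 0" by (meson not_less)
    then have "hfun lam t2 \<le> 0" unfolding hfun_def by (intro sum_nonpos) auto
    with h show False by simp
  qed
  have le: "\<forall>j\<in>UNIV. max 0 (1 - lam j * t2) \<le> max 0 (1 - lam j * t1)"
  proof
    fix j :: 'n
    have "lam j * t1 \<le> lam j * t2" using lam[of j] t by simp
    then show "max 0 (1 - lam j * t2) \<le> max 0 (1 - lam j * t1)" by simp
  qed
  have "lam i * t1 < lam i * t2" using lam[of i] t by simp
  then have "max 0 (1 - lam i * t2) < max 0 (1 - lam i * t1)" using i by simp
  then show ?thesis unfolding hfun_def
    by (intro sum_strict_mono_ex1) (use le in auto)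
qed

lemma h_nonpos:
  fixes lam :: "'n::finite \<Rightarrow> real"
  assumes lam: "\<And>i. lam i > 0" and t: "t \<le> 0"
  shows "hfun lam t \<ge> real CARD('n)"
proof -
  have "(\<Sum>i\<in>(UNIV::'n set). (1::real)) \<le> hfun lam t" unfolding hfun_def
  proof (intro sum_mono)
    fix i :: 'n
    have "lam i * t \<le> 0" using lam[of i] t by (simp add: mult_nonneg_nonpos)
    then show "1 \<le> max 0 (1 - lam i * t)" by simp
  qed
  then show ?thesis by simp
qed

lemma h_unique:
  fixes lam :: "'n::finite \<Rightarrow> real"
  assumes lam: "\<And>i. lam i > 0" and "hfun lam t1 = 1" "hfun lam t2 = 1"
  shows "t1 = t2"
proof (rule ccontr)
  assume "t1 \<noteq> t2"
  then consider "t1 < t2" | "t2 < t1" by linarith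
  then show False
  proof cases
    case 1 then show False using h_strict[of lam t1 t2] lam assms by fastforce
  next
    case 2 then show False using h_strict[of lam t2 t1] lam assms by fastforce
  qed
qed

lemma h_exists:
  fixes lam :: "'n::finite \<Rightarrow> real"
  assumes lam: "\<And>i. lam i > 0"
  shows "\<exists>t. hfun lam t = 1"
proof -
  define b where "b = (\<Sum>j\<in>UNIV. 1 / lam j)"
  have bi: "1 / lam i \<le> b" for i unfolding b_def
    by (rule member_le_sum) (use lam in \<open>auto intro: less_imp_le\<close>)
  have b0: "0 \<le> b" using bi[of undefined] lam[of undefined]
    by (meson less_eq_real_def order_trans zero_less_divide_1_iff)
  have "hfun lam b = 0" unfolding hfun_def
  proof (intro sum.neutral ballI)
    fix i :: 'n
    have "1 \<le> lam i * b" using bi[of i] lam[of i] by (simp add: field_simps)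
    then show "max 0 (1 - lam i * b) = 0" by simp
  qed
  moreover have "hfun lam 0 = real CARD('n)" unfolding hfun_def by simp
  moreover have "continuous_on {0..b} (hfun lam)" unfolding hfun_def
    by (intro continuous_intros)
  moreover have "real CARD('n) \<ge> 1" by simp
  ultimately show ?thesis using IVT2'[of "hfun lam" b 1 0] b0 by auto
qed



lemma sum_split1:
  fixes mu :: "'n::finite \<Rightarrow> real"
  shows "(\<Sum>j\<in>UNIV. mu j) = mu i + (\<Sum>j\<in>UNIV-{i}. mu j)"
  by (rule sum.remove) auto

lemma sum_upd1:
  fixes mu :: "'n::finite \<Rightarrow> real"
  shows "(\<Sum>j\<in>UNIV. (mu(i:=x)) j) = x + (\<Sum>j\<in>UNIV-{i}. mu j)"
proof -
  have "(\<Sum>j\<in>UNIV. (mu(i:=x)) j) = (mu(i:=x)) i + (\<Sum>j\<in>UNIV-{i}. (mu(i:=x)) j)"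
    by (rule sum_split1)
  also have "(\<Sum>j\<in>UNIV-{i}. (mu(i:=x)) j) = (\<Sum>j\<in>UNIV-{i}. mu j)"
    by (rule sum.cong) auto
  finally show ?thesis by simp
qed

lemma profit_dev:
  fixes mu :: "'n::finite \<Rightarrow> real"
  assumes T: "T = (\<Sum>j\<in>UNIV-{i}. mu j)" "T > 0" and x: "x \<ge> 0"
  shows "profit N lam R (mu(i:=x)) i = x / (x+T) * R * N - lam i * x"
proof -
  have "(\<Sum>j\<in>UNIV. (mu(i:=x)) j) = x + T" using sum_upd1 T by simp
  moreover have "x + T \<noteq> 0" using T x by simp
  ultimately show ?thesis unfolding profit_def share_def by simp
qed

lemma profit_self:
  fixes mu :: "'n::finite \<Rightarrow> real"
  shows "profit N lam R mu i = profit N lam R (mu(i:=mu i)) i"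
  by simp

lemma t0_pos:
  fixes lam :: "'n::finite \<Rightarrow> real"
  assumes lam: "\<And>i. lam i > 0" and c: "CARD('n) \<ge> 2" and h: "hfun lam t0 = 1"
  shows "t0 > 0"
proof (rule ccontr)
  assume "\<not> t0 > 0"
  then have "hfun lam t0 \<ge> real CARD('n)" using h_nonpos[of lam t0] lam by simp
  with c h show False by simp
qed

lemma NE_exist:
  fixes lam :: "'n::finite \<Rightarrow> real"
  assumes lam: "\<And>i. lam i > 0" and N: "N > 0" and c: "CARD('n) \<ge> 2"
    and h: "hfun lam t0 = 1" and R: "R > 0"
  shows "is_NE N lam R (\<lambda>i. R * (N * t0 * max 0 (1 - lam i * t0)))"
proof -
  define mu where "mu = (\<lambda>i. R * (N * t0 * max 0 (1 - lam i * t0)))"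
  have t0: "t0 > 0" using t0_pos[OF lam c h] .
  define S where "S = R*N*t0"
  have S: "S > 0" using R N t0 by (simp add: S_def)
  have sumS: "(\<Sum>j\<in>UNIV. mu j) = S"
  proof -
    have "(\<Sum>j\<in>UNIV. mu j) = R * N * t0 * hfun lam t0"
      unfolding mu_def hfun_def by (simp add: sum_distrib_left mult.assoc)
    then show ?thesis using h by (simp add: S_def)
  qed
  have nonneg: "\<forall>i. mu i \<ge> 0" unfolding mu_def using R N t0 by simp
  have "profit N lam R (mu(i := x)) i \<le> profit N lam R mu i" if x: "x \<ge> 0" for i x
  proof -
    define T where "T = (\<Sum>j\<in>UNIV-{i}. mu j)"
    have TS: "T = S - mu i" using sum_split1[of mu i] sumS by (simp add: T_def)
    have ts: "lam i * S / (R*N) = lam i * t0" using R N by (simp add: S_def)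
    have mui: "mu i = S * max 0 (1 - lam i * S / (R*N))"
      unfolding ts by (simp add: mu_def S_def)
    have Tp: "T > 0"
    proof (cases "1 - lam i * t0 \<le> 0")
      case True
      then have "mu i = 0" by (simp add: mu_def)
      then show ?thesis using TS S by simp
    next
      case False
      then have "mu i = S * (1 - lam i * t0)" by (simp add: mu_def S_def)
      then have "T = S * (lam i * t0)" using TS by (simp add: algebra_simps)
      then show ?thesis using S lam[of i] t0 by simp
    qed
    have "x / (x+T) * R * N - lam i * x \<le> mu i / (mu i+T) * R * N - lam i * mu i"
      by (rule resp_opt[OF R N lam[of i] S mui TS x])
    then show ?thesis
      using profit_dev[OF T_def Tp x, of N lam R] profit_dev[OF T_def Tp, of "mu i" N lam R]
        nonneg by simp
  qed
  then show ?thesis using nonneg unfolding is_NE_def mu_def by blast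
qed

lemma NE_unique:
  fixes lam :: "'n::finite \<Rightarrow> real"
  assumes lam: "\<And>i. lam i > 0" and N: "N > 0" and c: "CARD('n) \<ge> 2"
    and h: "hfun lam t0 = 1" and R: "R > 0" and ne: "is_NE N lam R mu"
  shows "mu = (\<lambda>i. R * (N * t0 * max 0 (1 - lam i * t0)))"
proof -
  have nonneg: "\<And>i. mu i \<ge> 0" and opt: "\<And>i x. x \<ge> 0 \<Longrightarrow> profit N lam R (mu(i := x)) i \<le> profit N lam R mu i"
    using ne unfolding is_NE_def by auto
  define S where "S = (\<Sum>j\<in>UNIV. mu j)"
  define V where "V = R*N"
  have V: "V > 0" using R N by (simp add: V_def)
  have S0: "S \<ge> 0" unfolding S_def using nonneg by (simp add: sum_nonneg)
  have Sp: "S > 0"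
  proof (rule ccontr)
    assume "\<not> S > 0"
    then have "S = 0" using S0 by simp
    then have z: "\<forall>j. mu j = 0" using nonneg unfolding S_def
      by (simp add: sum_nonneg_eq_0_iff)
    fix i :: 'n
    define x where "x = V / (2 * lam i)"
    have xp: "x > 0" using V lam[of i] by (simp add: x_def)
    have "(\<Sum>j\<in>UNIV. (mu(i:=x)) j) = x" using sum_upd1[of mu i x] z by simp
    then have "profit N lam R (mu(i := x)) i = x / x * R * N - lam i * x"
      unfolding profit_def share_def using xp by simp
    also have "\<dots> = V / 2" using xp lam[of i] by (simp add: x_def V_def)
    finally have "profit N lam R (mu(i := x)) i = V/2" .
    moreover have "profit N lam R mu i = 0" unfolding profit_def share_def using z by simp
    ultimately show False using opt[of x i] xp V by simp
  qed
  have each: "mu i = S * max 0 (1 - lam i * S / V)" for i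
  proof -
    define T where "T = (\<Sum>j\<in>UNIV-{i}. mu j)"
    have TS: "T = S - mu i" using sum_split1[of mu i] by (simp add: T_def S_def)
    have T0: "T \<ge> 0" unfolding T_def using nonneg by (simp add: sum_nonneg)
    have Tp: "T > 0"
    proof (rule ccontr)
      assume "\<not> T > 0"
      then have T00: "T = 0" using T0 by simp
      then have mS: "mu i = S" using TS by simp
      define x where "x = S/2"
      have xp: "x > 0" using Sp by (simp add: x_def)
      have "(\<Sum>j\<in>UNIV. (mu(i:=x)) j) = x" using sum_upd1[of mu i x] T00 by (simp add: T_def)
      then have "profit N lam R (mu(i := x)) i = x / x * R * N - lam i * x"
        unfolding profit_def share_def using xp by simp
      also have "\<dots> = V - lam i * x" using xp by (simp add: V_def)
      finally have p1: "profit N lam R (mu(i := x)) i = V - lam i * x" .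
      have "profit N lam R mu i = S / S * R * N - lam i * S"
        unfolding profit_def share_def using mS Sp by (simp add: S_def)
      also have "\<dots> = V - lam i * S" using Sp by (simp add: V_def)
      finally have p2: "profit N lam R mu i = V - lam i * S" .
      have "lam i * x < lam i * S" using lam[of i] Sp by (simp add: x_def)
      then show False using opt[of x i] xp p1 p2 by simp
    qed
    have "mu i = (mu i + T) * max 0 (1 - lam i * (mu i + T) / (R*N))"
    proof (rule resp_unique[OF R N lam[of i] Tp nonneg[of i]])
      fix x :: real assume x: "x \<ge> 0"
      show "x / (x + T) * R * N - lam i * x \<le> mu i / (mu i + T) * R * N - lam i * mu i"
        using opt[OF x, of i] profit_dev[OF T_def Tp x, of N lam R]
          profit_dev[OF T_def Tp nonneg[of i], of N lam R] by simp
    qed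
    then show ?thesis using TS by (simp add: V_def)
  qed
  have "S = S * hfun lam (S/V)"
  proof -
    have e: "(\<Sum>j\<in>UNIV. mu j) = (\<Sum>i\<in>UNIV. S * max 0 (1 - lam i * S / V))"
      by (rule sum.cong[OF refl each])
    have "S = (\<Sum>i\<in>UNIV. S * max 0 (1 - lam i * S / V))"
      using e by (simp only: S_def[symmetric])
    also have "\<dots> = S * hfun lam (S/V)" unfolding hfun_def
      by (simp add: sum_distrib_left)
    finally show ?thesis .
  qed
  then have "hfun lam (S/V) = 1" using Sp by simp
  then have "S/V = t0" using h_unique[of lam] lam h by blast
  then have SV: "S = V * t0" using V by (simp add: field_simps)
  show ?thesis
  proof
    fix i
    have "mu i = S * max 0 (1 - lam i * (S / V))" using each[of i] by simp
    then show "mu i = R * (N * t0 * max 0 (1 - lam i * t0))"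
      using SV \<open>S/V = t0\<close> by (simp add: V_def)
  qed
qed



lemma NE_zero:
  fixes lam :: "'n::finite \<Rightarrow> real"
  assumes lam: "\<And>i. lam i > 0"
  shows "is_NE N lam 0 mu \<longleftrightarrow> mu = (\<lambda>i. 0)"
proof
  assume ne: "is_NE N lam 0 mu"
  show "mu = (\<lambda>i. 0)"
  proof
    fix i
    have "profit N lam 0 (mu(i := 0)) i \<le> profit N lam 0 mu i" and "mu i \<ge> 0"
      using ne unfolding is_NE_def by auto
    then have "0 \<le> - lam i * mu i" "mu i \<ge> 0" unfolding profit_def by auto
    then show "mu i = 0" using lam[of i]
      by (metis mult_pos_pos neg_0_le_iff_le less_eq_real_def linorder_not_less mult_minus_left)
  qed
next
  assume "mu = (\<lambda>i. 0)"
  then show "is_NE N lam 0 mu" unfolding is_NE_def profit_def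
    using lam by (auto intro: mult_nonneg_nonneg less_imp_le)
qed

lemma frac3:
  fixes a b c :: real
  assumes "a \<noteq> 0" "b \<noteq> 0" "c \<noteq> 0"
  shows "1/a + 1/b - 2/c = (b*c + a*c - 2*(a*b)) / (a*b*c)"
  using assms by (simp add: field_simps)

lemma sig_mid:
  fixes a b :: real
  assumes a: "0 \<le> a" and ab: "a < b"
  shows "(sigmoid a + sigmoid b) / 2 < sigmoid ((a+b)/2)"
proof -
  define p where "p = exp (-a/2)"
  define q where "q = exp (-b/2)"
  have pp: "exp (-a) = p*p" unfolding p_def exp_add[symmetric] by simp
  have qq: "exp (-b) = q*q" unfolding q_def exp_add[symmetric] by simp
  have pq: "exp (-((a+b)/2)) = p*q" unfolding p_def q_def exp_add[symmetric] by (simp add: field_simps)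
  have p0: "p > 0" "q > 0" unfolding p_def q_def by auto
  have pq1: "p*q < 1" using pq[symmetric] a ab by simp
  have pne: "p \<noteq> q" unfolding p_def q_def using ab by simp
  have d: "1+p*p > 0" "1+q*q > 0" "1+p*q > 0" using p0 by (auto intro: add_pos_pos)
  have "1/(1+p*p) + 1/(1+q*q) - 2/(1+p*q) = ((1+q*q)*(1+p*q) + (1+p*p)*(1+p*q) - 2*((1+p*p)*(1+q*q))) / ((1+p*p)*(1+q*q)*(1+p*q))"
    using d by (intro frac3) auto
  also have "(1+q*q)*(1+p*q) + (1+p*p)*(1+p*q) - 2*((1+p*p)*(1+q*q)) = (p-q)^2*(p*q-1)"
    by (simp add: power2_eq_square algebra_simps)
  finally have "1/(1+p*p) + 1/(1+q*q) - 2/(1+p*q) = (p-q)^2*(p*q-1)/((1+p*p)*(1+q*q)*(1+p*q))" .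
  moreover have "(p-q)^2*(p*q-1)/((1+p*p)*(1+q*q)*(1+p*q)) < 0"
  proof -
    have "(p-q)^2 > 0" using pne by simp
    then have "(p-q)^2*(p*q-1) < 0" using pq1 by (simp add: mult_pos_neg)
    moreover have "(1+p*p)*(1+q*q)*(1+p*q) > 0" using p0 by (simp add: add_pos_pos)
    ultimately show ?thesis by (simp add: divide_neg_pos)
  qed
  ultimately have "1/(1+p*p) + 1/(1+q*q) < 2/(1+p*q)" by linarith
  then show ?thesis unfolding sigmoid_def pp qq pq by simp
qed



theorem theorem4:
  fixes N B alpha beta :: real and lam :: "'n::finite \<Rightarrow> real"
  assumes "CARD('n) \<ge> 2" and "N > 0" and "B > 0" and "alpha > 1"
    and "0 < beta" and "beta < 1" and "\<And>i. lam i > 0"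
  shows "\<exists>!(mu, R). is_SE N lam B alpha beta mu R"
proof -
  note c = assms(1) and N = assms(2) and B = assms(3) and al = assms(4) and be = assms(5)
    and lam = assms(7)
  obtain t0 where h: "hfun lam t0 = 1" using h_exists[of lam] lam by blast
  have t0: "t0 > 0" using t0_pos[of lam t0] lam c h by blast
  define m0 where "m0 = (\<lambda>i. N * t0 * max 0 (1 - lam i * t0))"
  have NE: "is_NE N lam R mu \<longleftrightarrow> mu = (\<lambda>i. R * m0 i)" if R: "R \<ge> 0" for R mu
  proof (cases "R = 0")
    case True
    then show ?thesis using NE_zero[of lam N mu] lam by simp
  next
    case False
    then have Rp: "R > 0" using R by simp
    show ?thesis using NE_exist[of lam N t0 R] NE_unique[of lam N t0 R mu] lam N c h Rp
      unfolding m0_def by blast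
  qed
  define k where "k = beta * (N * t0)"
  have k: "k > 0" using be N t0 by (simp add: k_def)
  have summ0: "(\<Sum>i\<in>UNIV. m0 i) = N * t0"
  proof -
    have "(\<Sum>i\<in>UNIV. m0 i) = N * t0 * hfun lam t0"
      unfolding m0_def hfun_def by (simp add: sum_distrib_left)
    then show ?thesis using h by simp
  qed
  define F where "F = (\<lambda>R. alpha * (sigmoid (k * R) - 1/2) - R)"
  have UF: "platform_U alpha beta R (\<lambda>i. R * m0 i) = F R" for R
  proof -
    have "(\<Sum>i\<in>UNIV. R * m0 i) = R * (N * t0)" using summ0 by (simp add: sum_distrib_left[symmetric])
    then show ?thesis unfolding platform_U_def F_def k_def by (simp add: algebra_simps)
  qed
  have contF: "continuous_on {0..B} F" unfolding F_def sigmoid_def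
    by (intro continuous_intros; smt (verit) exp_gt_zero)
  obtain Rs where Rs: "Rs \<in> {0..B}" and Rmax: "\<And>R. R \<in> {0..B} \<Longrightarrow> F R \<le> F Rs"
    using continuous_attains_sup[OF compact_Icc _ contF] B by auto
  have Funiq: "R1 = R2" if "R1 \<in> {0..B}" "R2 \<in> {0..B}"
    "\<And>R. R \<in> {0..B} \<Longrightarrow> F R \<le> F R1" "\<And>R. R \<in> {0..B} \<Longrightarrow> F R \<le> F R2" for R1 R2
  proof -
    have strict: False if a: "R1 \<in> {0..B}" "R2 \<in> {0..B}" "R1 < R2"
      "\<And>R. R \<in> {0..B} \<Longrightarrow> F R \<le> F R1" "\<And>R. R \<in> {0..B} \<Longrightarrow> F R \<le> F R2" for R1 R2
    proof -
      define s1 where "s1 = sigmoid (k*R1)"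
      define s2 where "s2 = sigmoid (k*R2)"
      define sm where "sm = sigmoid ((k*R1 + k*R2)/2)"
      have "(s1 + s2) / 2 < sm"
        using sig_mid[of "k*R1" "k*R2"] a k unfolding s1_def s2_def sm_def by simp
      then have "alpha * ((s1 + s2) / 2) < alpha * sm"
        using al by simp
      then have i1: "alpha * s1 + alpha * s2 < 2 * (alpha * sm)" by (simp add: algebra_simps)
      have "k * ((R1+R2)/2) = (k*R1 + k*R2)/2" by (simp add: algebra_simps)
      then have i2: "F ((R1+R2)/2) = alpha * sm - alpha/2 - (R1+R2)/2"
        unfolding F_def sm_def by (simp add: algebra_simps)
      have i3: "F R1 = alpha * s1 - alpha/2 - R1" "F R2 = alpha * s2 - alpha/2 - R2"
        unfolding F_def s1_def s2_def by (simp_all add: algebra_simps)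
      have "(F R1 + F R2)/2 < F ((R1+R2)/2)" using i1 i2 i3 by (simp add: field_simps)
      moreover have "F ((R1+R2)/2) \<le> F R1" using a by auto
      moreover have "F R2 = F R1" using a by (meson order_antisym)
      ultimately show False by simp
    qed
    show ?thesis
    proof (rule ccontr)
      assume "R1 \<noteq> R2"
      then consider "R1 < R2" | "R2 < R1" by linarith
      then show False
        by cases (use strict[of R1 R2] strict[of R2 R1] that in blast)+
    qed
  qed
  have SE: "is_SE N lam B alpha beta mu R \<longleftrightarrow> R \<in> {0..B} \<and> mu = (\<lambda>i. R * m0 i) \<and>
      (\<forall>R'\<in>{0..B}. F R' \<le> F R)" for mu R
  proof
    assume se: "is_SE N lam B alpha beta mu R"
    then have R: "R \<in> {0..B}" and mu: "mu = (\<lambda>i. R * m0 i)"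
      unfolding is_SE_def using NE by auto
    have "F R' \<le> F R" if "R' \<in> {0..B}" for R'
      using se that NE[of R' "\<lambda>i. R' * m0 i"] unfolding is_SE_def mu UF[symmetric] by auto
    then show "R \<in> {0..B} \<and> mu = (\<lambda>i. R * m0 i) \<and> (\<forall>R'\<in>{0..B}. F R' \<le> F R)"
      using R mu by blast
  next
    assume a: "R \<in> {0..B} \<and> mu = (\<lambda>i. R * m0 i) \<and> (\<forall>R'\<in>{0..B}. F R' \<le> F R)"
    then show "is_SE N lam B alpha beta mu R"
      unfolding is_SE_def using NE UF by auto
  qed
  show ?thesis
  proof (rule ex1I[of _ "((\<lambda>i. Rs * m0 i), Rs)"])
    show "case ((\<lambda>i. Rs * m0 i), Rs) of (mu, R) \<Rightarrow> is_SE N lam B alpha beta mu R"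
      using SE Rs Rmax by auto
  next
    fix x assume "case x of (mu, R) \<Rightarrow> is_SE N lam B alpha beta mu R"
    then obtain mu R where x: "x = (mu, R)" and "is_SE N lam B alpha beta mu R"
      by (cases x) auto
    then have R: "R \<in> {0..B}" and mu: "mu = (\<lambda>i. R * m0 i)" and m: "\<forall>R'\<in>{0..B}. F R' \<le> F R"
      using SE by auto
    have "R = Rs" using Funiq[of R Rs] R Rs m Rmax by blast
    then show "x = ((\<lambda>i. Rs * m0 i), Rs)" using x mu by simp
  qed
qed

end
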